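(* Let $\lambda,\mu,\nu$ be partitions with at most $3$ parts (written as triples $(\xi_1,\xi_2,\xi_3)$, $\xi_1\ge\xi_2\ge\xi_3\ge0$). Then the Littlewood–Richardson coefficient $c^{\lambda}_{\mu,\nu}$ (the coefficient of $s_\lambda$ in $s_\mu s_\nu$, Schur functions) equals $1$ if and only if $(\lambda,\mu,\nu)$ lies on a facet of the Horn cone $\mathcal{H}_3$, i.e. $|\lambda|=|\mu|+|\nu|$, all eighteen inequalities listed below hold, and at least one of them holds with equality.
   Context: The eighteen inequalities defining $\mathcal{H}_3$ (together with $|\lambda|=|\mu|+|\nu|$, where $|\xi|=\xi_1+\xi_2+\xi_3$) are: (1) $\mu_3\le\mu_2$; (2) $\mu_2\le\mu_1$; (3) $\nu_3\le\nu_2$; (4) $\nu_2\le\nu_1$; (5) $\lambda_3\le\lambda_2$; (6) $\lambda_2\le\lambda_1$; (7) $\lambda_1\le\mu_1+\nu_1$; (8) $\lambda_2\le\mu_1+\nu_2$; (9) $\lambda_2\le\mu_2+\nu_1$; (10) $\lambda_3\le\mu_1+\nu_3$; (11) $\lambda_3\le\mu_2+\nu_2$; (12) $\lambda_3\le\mu_3+\nu_1$; (13) $\lambda_3\ge\mu_3+\nu_3$; (14) $\lambda_2\ge\mu_3+\nu_2$; (15) $\lambda_2\ge\mu_2+\nu_3$; (16) $\lambda_1\ge\mu_3+\nu_1$; (17) $\lambda_1\ge\mu_2+\nu_2$; (18) $\lambda_1\ge\mu_1+\nu_3$. A facet is the set of points of $\mathcal{H}_3$ at which one of these inequalities is an equality.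 *)

theory Defs
  imports Main
begin

text \<open>Partitions with at most three parts are triples (x1,x2,x3) of naturals with
  x1 \<ge> x2 \<ge> x3 (\<ge> 0 automatic). Exponent vectors of monomials in x1,x2,x3 are
  also triples of naturals.\<close>

type_synonym triple = "nat \<times> nat \<times> nat"

definition is_part3 :: "triple \<Rightarrow> bool" where
  "is_part3 p = (case p of (a, b, c) \<Rightarrow> b \<le> a \<and> c \<le> b)"

definition size3 :: "triple \<Rightarrow> nat" where
  "size3 p = (case p of (a, b, c) \<Rightarrow> a + b + c)"

definition part :: "triple \<Rightarrow> nat \<Rightarrow> nat" where
  "part p i = (case p of (a, b, c) \<Rightarrow> if i = 0 then a else if i = 1 then b else if i = 2 then c else 0)"

definition cell :: "triple \<Rightarrow> nat \<Rightarrow> nat \<Rightarrow> bool" where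
  "cell p i j = (i < 3 \<and> j < part p i)"

definition ssyt3 :: "triple \<Rightarrow> (nat \<Rightarrow> nat \<Rightarrow> nat) \<Rightarrow> bool" where
  "ssyt3 p T =
    ((\<forall>i j. cell p i j \<longrightarrow> T i j \<in> {1, 2, 3}) \<and>
     (\<forall>i j. \<not> cell p i j \<longrightarrow> T i j = 0) \<and>
     (\<forall>i j. cell p i (Suc j) \<longrightarrow> T i j \<le> T i (Suc j)) \<and>
     (\<forall>i j. cell p (Suc i) j \<longrightarrow> T i j < T (Suc i) j))"

definition content3 :: "triple \<Rightarrow> (nat \<Rightarrow> nat \<Rightarrow> nat) \<Rightarrow> triple" where
  "content3 p T =
    (card {(i, j). cell p i j \<and> T i j = 1},
     card {(i, j). cell p i j \<and> T i j = 2},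
     card {(i, j). cell p i j \<and> T i j = 3})"

text \<open>Coefficient of the monomial x^al in the Schur polynomial s_p(x1,x2,x3)
  (= sum over SSYT T of shape p of x^content(T)).\<close>
definition schur_coeff :: "triple \<Rightarrow> triple \<Rightarrow> int" where
  "schur_coeff p al = int (card {T. ssyt3 p T \<and> content3 p T = al})"

text \<open>Coefficient of x^al in the product s_mu s_nu (product of polynomials = convolution).\<close>
definition schur_prod_coeff :: "triple \<Rightarrow> triple \<Rightarrow> triple \<Rightarrow> int" where
  "schur_prod_coeff mu nu al =
    (case al of (a1, a2, a3) \<Rightarrow>
      (\<Sum>b1\<le>a1. \<Sum>b2\<le>a2. \<Sum>b3\<le>a3.
         schur_coeff mu (b1, b2, b3) * schur_coeff nu (a1 - b1, a2 - b2, a3 - b3)))"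

definition parts3_of_size :: "nat \<Rightarrow> triple set" where
  "parts3_of_size n = {p. is_part3 p \<and> size3 p = n}"

text \<open>Littlewood--Richardson coefficient c^la_{mu,nu}: the coefficient of s_la in the
  (unique) expansion of s_mu s_nu as a linear combination of Schur polynomials
  (in three variables, which suffices for partitions with at most three parts).\<close>
definition lr_coeff :: "triple \<Rightarrow> triple \<Rightarrow> triple \<Rightarrow> int" where
  "lr_coeff la mu nu =
    (THE c. (\<forall>al. schur_prod_coeff mu nu al =
               (\<Sum>p\<in>parts3_of_size (size3 mu + size3 nu). c p * schur_coeff p al))
          \<and> (\<forall>p. p \<notin> parts3_of_size (size3 mu + size3 nu) \<longrightarrow> c p = 0)) la"

text \<open>The eighteen inequalities (1)-(18) defining H_3, each written as (lhs, rhs)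
  meaning lhs \<le> rhs.\<close>
definition horn3_ineqs :: "triple \<Rightarrow> triple \<Rightarrow> triple \<Rightarrow> (nat \<times> nat) list" where
  "horn3_ineqs la mu nu =
    (case la of (l1, l2, l3) \<Rightarrow> case mu of (m1, m2, m3) \<Rightarrow> case nu of (n1, n2, n3) \<Rightarrow>
     [(m3, m2), (m2, m1), (n3, n2), (n2, n1), (l3, l2), (l2, l1),
      (l1, m1 + n1), (l2, m1 + n2), (l2, m2 + n1),
      (l3, m1 + n3), (l3, m2 + n2), (l3, m3 + n1),
      (m3 + n3, l3), (m3 + n2, l2), (m2 + n3, l2),
      (m3 + n1, l1), (m2 + n2, l1), (m1 + n3, l1)])"

definition in_horn3 :: "triple \<Rightarrow> triple \<Rightarrow> triple \<Rightarrow> bool" where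
  "in_horn3 la mu nu =
    (size3 la = size3 mu + size3 nu \<and> (\<forall>(a, b) \<in> set (horn3_ineqs la mu nu). a \<le> b))"

definition on_horn3_facet :: "triple \<Rightarrow> triple \<Rightarrow> triple \<Rightarrow> bool" where
  "on_horn3_facet la mu nu =
    (in_horn3 la mu nu \<and> (\<exists>(a, b) \<in> set (horn3_ineqs la mu nu). a = b))"

end

theory Submission
  imports Defs
begin

lemma cell_abc: "cell (a,b,c) i j \<longleftrightarrow> (i = 0 \<and> j < a) \<or> (i = 1 \<and> j < b) \<or> (i = 2 \<and> j < c)"
  by (auto simp: cell_def part_def)

definition tabg :: "nat \<Rightarrow> nat \<Rightarrow> nat \<Rightarrow> nat \<Rightarrow> nat \<Rightarrow> nat \<Rightarrow> nat \<Rightarrow> nat \<Rightarrow> nat" where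
"tabg a b c r1 r2 t i j = (if i = 0 \<and> j < a then (if j < r1 then 1 else if j < r2 then 2 else 3)
   else if i = 1 \<and> j < b then (if j < t then 2 else 3) else if i = 2 \<and> j < c then 3 else 0)"

lemma tabg_ssyt:
  assumes "c \<le> t" "t \<le> r1" "b \<le> r2" "r1 \<le> r2" "r2 \<le> a" "t \<le> b"
  shows "ssyt3 (a,b,c) (tabg a b c r1 r2 t)"
  unfolding ssyt3_def
proof (intro conjI allI impI)
  fix i j assume "cell (a,b,c) i j" then show "tabg a b c r1 r2 t i j \<in> {1,2,3}"
    by (auto simp: cell_abc tabg_def)
next
  fix i j assume "\<not> cell (a,b,c) i j" then show "tabg a b c r1 r2 t i j = 0"
    by (auto simp: cell_abc tabg_def)
next
  fix i j assume "cell (a,b,c) i (Suc j)" then show "tabg a b c r1 r2 t i j \<le> tabg a b c r1 r2 t i (Suc j)"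
    by (auto simp: cell_abc tabg_def)
next
  fix i j assume "cell (a,b,c) (Suc i) j" then show "tabg a b c r1 r2 t i j < tabg a b c r1 r2 t (Suc i) j"
    using assms by (auto simp: cell_abc tabg_def)
qed

lemma card_pair: "card (Pair i ` A) = card A"
  by (simp add: card_image inj_on_def)

lemma tabg_content:
  assumes "r1 \<le> r2" "r2 \<le> a" "t \<le> b"
  shows "content3 (a,b,c) (tabg a b c r1 r2 t) = (r1, r2 - r1 + t, a - r2 + (b - t) + c)"
proof -
  have s1: "{(i, j). cell (a,b,c) i j \<and> tabg a b c r1 r2 t i j = 1} = Pair 0 ` {..<r1}"
    using assms by (auto simp: cell_abc tabg_def split: if_splits)
  have s2: "{(i, j). cell (a,b,c) i j \<and> tabg a b c r1 r2 t i j = 2} = Pair 0 ` {r1..<r2} \<union> Pair 1 ` {..<t}"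
    using assms by (auto simp: cell_abc tabg_def split: if_splits)
  have s3: "{(i, j). cell (a,b,c) i j \<and> tabg a b c r1 r2 t i j = 3} = Pair 0 ` {r2..<a} \<union> (Pair 1 ` {t..<b} \<union> Pair 2 ` {..<c})"
    using assms by (auto simp: cell_abc tabg_def split: if_splits)
  have c2: "card (Pair 0 ` {r1..<r2} \<union> Pair (1::nat) ` {..<t}) = r2 - r1 + t"
    by (subst card_Un_disjoint) (auto simp: card_pair)
  have c3: "card (Pair 0 ` {r2..<a} \<union> (Pair 1 ` {t..<b} \<union> Pair (2::nat) ` {..<c})) = a - r2 + (b - t) + c"
    apply (subst card_Un_disjoint, simp, simp, force)
    apply (subst card_Un_disjoint, simp, simp, force)
    by (simp add: card_pair)
  show ?thesis unfolding content3_def s1 s2 s3 c2 c3 by (simp add: card_pair)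
qed

lemma down_closed:
  assumes "finite S" "\<forall>j\<in>S. \<forall>i\<le>j. i \<in> S"
  shows "S = {..<card S}"
proof -
  have sub: "S \<subseteq> {..<card S}"
  proof
    fix j assume j: "j \<in> S"
    show "j \<in> {..<card S}"
    proof (rule ccontr)
      assume "j \<notin> {..<card S}"
      hence "card S \<le> j" by simp
      have "{..j} \<subseteq> S" using assms(2) j by auto
      hence "card {..j} \<le> card S" using assms(1) card_mono by blast
      thus False using \<open>card S \<le> j\<close> by simp
    qed
  qed
  show ?thesis by (rule card_subset_eq) (use sub in auto)
qed

lemma row_mono:
  assumes "ssyt3 p T" "j \<le> j'" "cell p i j'"
  shows "T i j \<le> T i j'"
  using assms(2,3)
proof (induction j' rule: dec_induct)
  case base then show ?case by simp
next
  case (step k)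
  have "cell p i k" using step.prems by (auto simp: cell_def)
  then have "T i j \<le> T i k" using step.IH by simp
  also have "T i k \<le> T i (Suc k)" using assms(1) step.prems unfolding ssyt3_def by blast
  finally show ?case .
qed

lemma thresh:
  fixes g :: "nat \<Rightarrow> nat"
  assumes mono: "\<And>j j'. j \<le> j' \<Longrightarrow> j' < n \<Longrightarrow> g j \<le> g j'" and jn: "j < n"
  shows "g j \<le> v \<longleftrightarrow> j < card {j. j < n \<and> g j \<le> v}"
proof -
  let ?S = "{j. j < n \<and> g j \<le> v}"
  have fin: "finite ?S" by simp
  have dc: "\<forall>j\<in>?S. \<forall>i\<le>j. i \<in> ?S"
  proof (intro ballI allI impI)
    fix j i assume j: "j \<in> ?S" and ij: "i \<le> j"
    then have "i < n" by simp
    moreover have "g i \<le> g j" by (rule mono[OF ij]) (use j in simp)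
    moreover have "g j \<le> v" using j by simp
    ultimately show "i \<in> ?S" by simp
  qed
  define k where "k = card ?S"
  have eq: "?S = {..<k}" unfolding k_def by (rule down_closed[OF fin dc])
  have "j \<in> ?S \<longleftrightarrow> j < k" unfolding eq by simp
  thus ?thesis using jn unfolding k_def by simp
qed

lemma card_thresh_le: "card {j::nat. j < n \<and> g j \<le> (v::nat)} \<le> n"
proof -
  have "card {j::nat. j < n \<and> g j \<le> v} \<le> card {..<n}" by (rule card_mono) auto
  thus ?thesis by simp
qed

lemma card_thresh_mono: "v \<le> w \<Longrightarrow> card {j::nat. j < n \<and> g j \<le> (v::nat)} \<le> card {j. j < n \<and> g j \<le> w}"
  apply (rule card_mono) apply (rule finite_subset[where B="{..<n}"]) by auto

lemma ssyt_struct: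
  assumes T: "ssyt3 (a,b,c) T" and p: "c \<le> b" "b \<le> a"
  shows "\<exists>r1 r2 t. T = tabg a b c r1 r2 t \<and> c \<le> t \<and> t \<le> r1 \<and> b \<le> r2 \<and> r1 \<le> r2 \<and> r2 \<le> a \<and> t \<le> b"
proof -
  have vals: "\<And>i j. cell (a,b,c) i j \<Longrightarrow> T i j \<in> {1,2,3}" and zero: "\<And>i j. \<not> cell (a,b,c) i j \<Longrightarrow> T i j = 0"
    and col: "\<And>i j. cell (a,b,c) (Suc i) j \<Longrightarrow> T i j < T (Suc i) j"
    using T unfolding ssyt3_def by blast+
  have m0: "\<And>j j'. j \<le> j' \<Longrightarrow> j' < a \<Longrightarrow> T 0 j \<le> T 0 j'"
    using row_mono[OF T] by (simp add: cell_abc)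
  have m1: "\<And>j j'. j \<le> j' \<Longrightarrow> j' < b \<Longrightarrow> T 1 j \<le> T 1 j'"
    using row_mono[OF T] by (simp add: cell_abc)
  define r1 where "r1 = card {j. j < a \<and> T 0 j \<le> 1}"
  define r2 where "r2 = card {j. j < a \<and> T 0 j \<le> 2}"
  define t where "t = card {j. j < b \<and> T 1 j \<le> 2}"
  have h1: "\<And>j. j < a \<Longrightarrow> T 0 j \<le> 1 \<longleftrightarrow> j < r1" unfolding r1_def by (rule thresh[where g="T 0", OF m0])
  have h2: "\<And>j. j < a \<Longrightarrow> T 0 j \<le> 2 \<longleftrightarrow> j < r2" unfolding r2_def by (rule thresh[where g="T 0", OF m0])
  have h3: "\<And>j. j < b \<Longrightarrow> T 1 j \<le> 2 \<longleftrightarrow> j < t" unfolding t_def by (rule thresh[where g="T 1", OF m1])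
  have r12: "r1 \<le> r2" unfolding r1_def r2_def by (rule card_thresh_mono) simp
  have r2a: "r2 \<le> a" unfolding r2_def by (rule card_thresh_le)
  have tb: "t \<le> b" unfolding t_def by (rule card_thresh_le)
  have v0: "\<And>j. j < a \<Longrightarrow> T 0 j \<in> {1,2,3}" using vals by (simp add: cell_abc)
  have v1: "\<And>j. j < b \<Longrightarrow> T 1 j \<in> {1,2,3}" using vals by (simp add: cell_abc)
  have v2: "\<And>j. j < c \<Longrightarrow> T 2 j \<in> {1,2,3}" using vals by (simp add: cell_abc)
  have c01: "\<And>j. j < b \<Longrightarrow> T 0 j < T 1 j" using col[of 0] by (simp add: cell_abc)
  have c12: "\<And>j. j < c \<Longrightarrow> T 1 j < T 2 j" using col[of 1] by (simp add: cell_abc numeral_2_eq_2)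
  have row0: "\<And>j. j < a \<Longrightarrow> T 0 j = (if j < r1 then 1 else if j < r2 then 2 else 3)"
    using h1 h2 v0 by fastforce
  have row1: "\<And>j. j < b \<Longrightarrow> T 1 j = (if j < t then 2 else 3)"
  proof -
    fix j assume j: "j < b"
    have "T 1 j \<ge> 2" using c01[OF j] v0[of j] j p by auto
    thus "T 1 j = (if j < t then 2 else 3)" using h3[OF j] v1[OF j] by auto
  qed
  have row2: "\<And>j. j < c \<Longrightarrow> T 2 j = 3 \<and> j < t"
  proof -
    fix j assume j: "j < c"
    have jb: "j < b" using j p by simp
    have "T 1 j \<ge> 2" using row1[OF jb] by simp
    hence "T 2 j = 3" using c12[OF j] v2[OF j] by auto
    moreover have "T 1 j \<le> 2" using c12[OF j] v2[OF j] by auto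
    ultimately show "T 2 j = 3 \<and> j < t" using h3[OF jb] by simp
  qed
  have ct: "c \<le> t"
  proof (cases c)
    case (Suc k) then show ?thesis using row2[of k] by simp
  qed simp
  have tr1: "t \<le> r1"
  proof (cases t)
    case (Suc k)
    then have kb: "k < b" using tb by simp
    have "T 1 k = 2" using row1[OF kb] Suc by simp
    hence "T 0 k \<le> 1" using c01[OF kb] by simp
    thus ?thesis using h1[of k] kb p Suc by simp
  qed simp
  have br2: "b \<le> r2"
  proof (cases b)
    case (Suc k)
    then have kb: "k < b" by simp
    have "T 1 k \<le> 3" using row1[OF kb] by simp
    hence "T 0 k \<le> 2" using c01[OF kb] by simp
    thus ?thesis using h2[of k] kb p Suc by simp
  qed simp
  have "T = tabg a b c r1 r2 t"
  proof (intro ext)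
    fix i j
    show "T i j = tabg a b c r1 r2 t i j"
    proof (cases "cell (a,b,c) i j")
      case True
      then consider "i = 0" "j < a" | "i = 1" "j < b" | "i = 2" "j < c" by (auto simp: cell_abc)
      then show ?thesis
      proof cases
        case 1 then show ?thesis using row0 by (simp add: tabg_def)
      next
        case 2 then show ?thesis using row1 by (simp add: tabg_def)
      next
        case 3 then show ?thesis using row2 by (simp add: tabg_def)
      qed
    next
      case False
      then show ?thesis using zero by (auto simp: tabg_def cell_abc)
    qed
  qed
  thus ?thesis using ct tr1 br2 r12 r2a tb by blast
qed

definition kz :: "int \<Rightarrow> int \<Rightarrow> int \<Rightarrow> int \<Rightarrow> int \<Rightarrow> int \<Rightarrow> int" where
"kz a b c x y z = (if 0 \<le> x \<and> 0 \<le> y \<and> 0 \<le> z \<and> x+y+z = a+b+c then max 0 (min (min b x) (min y (x+y-b)) - max c (x+y-a) + 1) else 0)"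

definition D12 :: "(int \<Rightarrow> int \<Rightarrow> int \<Rightarrow> int) \<Rightarrow> int \<Rightarrow> int \<Rightarrow> int \<Rightarrow> int" where
"D12 f x y z = f (x-1) y z - f x (y-1) z"
definition D13 :: "(int \<Rightarrow> int \<Rightarrow> int \<Rightarrow> int) \<Rightarrow> int \<Rightarrow> int \<Rightarrow> int \<Rightarrow> int" where
"D13 f x y z = f (x-1) y z - f x y (z-1)"
definition D23 :: "(int \<Rightarrow> int \<Rightarrow> int \<Rightarrow> int) \<Rightarrow> int \<Rightarrow> int \<Rightarrow> int \<Rightarrow> int" where
"D23 f x y z = f x (y-1) z - f x y (z-1)"
definition Dop :: "(int \<Rightarrow> int \<Rightarrow> int \<Rightarrow> int) \<Rightarrow> int \<Rightarrow> int \<Rightarrow> int \<Rightarrow> int" where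
"Dop f = D12 (D13 (D23 f))"

definition Alt :: "int \<Rightarrow> int \<Rightarrow> int \<Rightarrow> int \<Rightarrow> int \<Rightarrow> int \<Rightarrow> int" where
"Alt q1 q2 q3 x y z = (if x = q1 \<and> y = q2 \<and> z = q3 then 1 else 0) - (if x = q2 \<and> y = q1 \<and> z = q3 then 1 else 0)
  - (if x = q1 \<and> y = q3 \<and> z = q2 then 1 else 0) - (if x = q3 \<and> y = q2 \<and> z = q1 then 1 else 0)
  + (if x = q2 \<and> y = q3 \<and> z = q1 then 1 else 0) + (if x = q3 \<and> y = q1 \<and> z = q2 then 1 else 0)"

definition orth :: "(int \<Rightarrow> int \<Rightarrow> int \<Rightarrow> int) \<Rightarrow> bool" where
"orth f = (\<forall>x y z. x < 0 \<or> y < 0 \<or> z < 0 \<longrightarrow> f x y z = 0)"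

lemma orth_D12: "orth f \<Longrightarrow> orth (D12 f)" unfolding orth_def D12_def by auto
lemma orth_D13: "orth f \<Longrightarrow> orth (D13 f)" unfolding orth_def D13_def by auto
lemma orth_D23: "orth f \<Longrightarrow> orth (D23 f)" unfolding orth_def D23_def by auto

lemma inj_D12:
  assumes o: "orth f" and d: "\<And>x y z. D12 f x y z = 0"
  shows "f x y z = 0"
proof -
  have sh: "\<And>u v w. f u v w = f (u+1) (v-1) w" using d unfolding D12_def
    by (metis add_diff_cancel_right' eq_iff_diff_eq_0)
  have k: "\<And>k::nat. f u v w = f (u + int k) (v - int k) w" for u v w
  proof -
    fix k :: nat show "f u v w = f (u + int k) (v - int k) w"
      by (induction k) (simp, metis sh add.commute add.left_commute diff_diff_eq of_nat_Suc)
  qed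
  show ?thesis
  proof (cases "y < 0")
    case True then show ?thesis using o unfolding orth_def by blast
  next
    case False
    have "f x y z = f (x + int (nat (y+1))) (y - int (nat (y+1))) z" by (rule k)
    also have "\<dots> = 0" using o False unfolding orth_def by simp
    finally show ?thesis .
  qed
qed

lemma inj_D13:
  assumes o: "orth f" and d: "\<And>x y z. D13 f x y z = 0"
  shows "f x y z = 0"
proof -
  have sh: "\<And>u v w. f u v w = f (u+1) v (w-1)" using d unfolding D13_def
    by (metis add_diff_cancel_right' eq_iff_diff_eq_0)
  have k: "\<And>k::nat. f u v w = f (u + int k) v (w - int k)" for u v w
  proof -
    fix k :: nat show "f u v w = f (u + int k) v (w - int k)"
      by (induction k) (simp, metis sh add.commute add.left_commute diff_diff_eq of_nat_Suc)
  qed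
  show ?thesis
  proof (cases "z < 0")
    case True then show ?thesis using o unfolding orth_def by blast
  next
    case False
    have "f x y z = f (x + int (nat (z+1))) y (z - int (nat (z+1)))" by (rule k)
    also have "\<dots> = 0" using o False unfolding orth_def by simp
    finally show ?thesis .
  qed
qed

lemma inj_D23:
  assumes o: "orth f" and d: "\<And>x y z. D23 f x y z = 0"
  shows "f x y z = 0"
proof -
  have sh: "\<And>u v w. f u v w = f u (v+1) (w-1)" using d unfolding D23_def
    by (metis add_diff_cancel_right' eq_iff_diff_eq_0)
  have k: "\<And>k::nat. f u v w = f u (v + int k) (w - int k)" for u v w
  proof -
    fix k :: nat show "f u v w = f u (v + int k) (w - int k)"
      by (induction k) (simp, metis sh add.commute add.left_commute diff_diff_eq of_nat_Suc)
  qed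
  show ?thesis
  proof (cases "z < 0")
    case True then show ?thesis using o unfolding orth_def by blast
  next
    case False
    have "f x y z = f x (y + int (nat (z+1))) (z - int (nat (z+1)))" by (rule k)
    also have "\<dots> = 0" using o False unfolding orth_def by simp
    finally show ?thesis .
  qed
qed

lemma D12_diff: "D12 (\<lambda>x y z. f x y z - g x y z) x y z = D12 f x y z - D12 g x y z"
  unfolding D12_def by simp
lemma D13_diff: "D13 (\<lambda>x y z. f x y z - g x y z) x y z = D13 f x y z - D13 g x y z"
  unfolding D13_def by simp
lemma D23_diff: "D23 (\<lambda>x y z. f x y z - g x y z) x y z = D23 f x y z - D23 g x y z"
  unfolding D23_def by simp

lemma Dop_inj:
  assumes "orth f" "orth g" "\<And>x y z. Dop f x y z = Dop g x y z"
  shows "f = g"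
proof -
  let ?h = "\<lambda>x y z. f x y z - g x y z"
  have oh: "orth ?h" using assms(1,2) unfolding orth_def by simp
  have eq: "Dop ?h x y z = 0" for x y z
    using assms(3)[of x y z] unfolding Dop_def
    by (simp add: D12_diff D13_diff D23_diff D12_def D13_def D23_def)
  have "D13 (D23 ?h) x y z = 0" for x y z
    by (rule inj_D12[OF orth_D13[OF orth_D23[OF oh]]]) (use eq in \<open>simp add: Dop_def\<close>)
  hence "D23 ?h x y z = 0" for x y z
    by (rule inj_D13[OF orth_D23[OF oh]])
  hence "?h x y z = 0" for x y z
    by (rule inj_D23[OF oh])
  thus ?thesis by (intro ext) simp
qed

definition Iset :: "nat \<Rightarrow> nat \<Rightarrow> nat \<Rightarrow> nat \<Rightarrow> nat \<Rightarrow> nat set" where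
"Iset a b c x y = {t. c \<le> t \<and> t \<le> b \<and> t \<le> x \<and> t \<le> y \<and> b + t \<le> x + y \<and> x + y \<le> a + t}"

lemma schur_set:
  assumes p: "c \<le> b" "b \<le> a"
  shows "{T. ssyt3 (a,b,c) T \<and> content3 (a,b,c) T = (x,y,z)} =
    (if x+y+z = a+b+c then (\<lambda>t. tabg a b c x (x+y-t) t) ` Iset a b c x y else {})"
proof (intro equalityI subsetI)
  fix T assume "T \<in> {T. ssyt3 (a,b,c) T \<and> content3 (a,b,c) T = (x,y,z)}"
  then have T: "ssyt3 (a,b,c) T" and ct: "content3 (a,b,c) T = (x,y,z)" by auto
  obtain r1 r2 t where e: "T = tabg a b c r1 r2 t" and h: "c \<le> t" "t \<le> r1" "b \<le> r2" "r1 \<le> r2" "r2 \<le> a" "t \<le> b"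
    using ssyt_struct[OF T p] by blast
  have c1: "content3 (a,b,c) T = (r1, r2 - r1 + t, a - r2 + (b - t) + c)"
    unfolding e by (rule tabg_content[OF h(4,5,6)])
  have "(r1, r2 - r1 + t, a - r2 + (b - t) + c) = (x,y,z)"
    using ct c1 by metis
  then have xyz: "r1 = x" "y = r2 - r1 + t" "z = a - r2 + (b - t) + c" by auto
  have s: "x+y+z = a+b+c" using xyz h by arith
  have r2: "r2 = x + y - t" using xyz h by arith
  have tI: "t \<in> Iset a b c x y" unfolding Iset_def mem_Collect_eq using xyz h by arith
  show "T \<in> (if x+y+z = a+b+c then (\<lambda>t. tabg a b c x (x+y-t) t) ` Iset a b c x y else {})"
    using s tI unfolding e r2 xyz(1) by simp
next
  fix T assume "T \<in> (if x+y+z = a+b+c then (\<lambda>t. tabg a b c x (x+y-t) t) ` Iset a b c x y else {})"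
  then obtain t where s: "x+y+z = a+b+c" and tI: "t \<in> Iset a b c x y" and e: "T = tabg a b c x (x+y-t) t"
    by (auto split: if_splits)
  have h: "c \<le> t" "t \<le> x" "b \<le> x+y-t" "x \<le> x+y-t" "x+y-t \<le> a" "t \<le> b"
    using tI unfolding Iset_def by auto
  have "ssyt3 (a,b,c) T" unfolding e by (rule tabg_ssyt[OF h])
  moreover have "content3 (a,b,c) T = (x,y,z)" unfolding e tabg_content[OF h(4,5,6)]
    using h s by auto
  ultimately show "T \<in> {T. ssyt3 (a,b,c) T \<and> content3 (a,b,c) T = (x,y,z)}" by simp
qed

lemma tabg_inj: "inj_on (\<lambda>t. tabg a b c x (x+y-t) t) (Iset a b c x y)"
proof (rule inj_onI)
  fix t t' assume t: "t \<in> Iset a b c x y" and t': "t' \<in> Iset a b c x y"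
    and eq: "tabg a b c x (x+y-t) t = tabg a b c x (x+y-t') t'"
  show "t = t'"
  proof (rule ccontr)
    assume ne: "t \<noteq> t'"
    let ?m = "min t t'"
    have "?m < b" using t t' ne unfolding Iset_def by (auto simp: min_def)
    then have "tabg a b c x (x+y-t) t 1 ?m \<noteq> tabg a b c x (x+y-t') t' 1 ?m"
      using ne by (auto simp: tabg_def min_def)
    thus False using eq by simp
  qed
qed

lemma card_Iset: "int (card (Iset a b c x y)) =
   max 0 (min (min (int b) (int x)) (min (int y) (int x + int y - int b)) - max (int c) (int x + int y - int a) + 1)"
proof -
  let ?lo = "max (int c) (int x + int y - int a)"
  let ?hi = "min (min (int b) (int x)) (min (int y) (int x + int y - int b))"
  have im: "int ` Iset a b c x y = {?lo..?hi}"
  proof (intro equalityI subsetI)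
    fix v assume "v \<in> int ` Iset a b c x y"
    then obtain t where "t \<in> Iset a b c x y" "v = int t" by auto
    then show "v \<in> {?lo..?hi}" unfolding Iset_def by auto
  next
    fix v assume v: "v \<in> {?lo..?hi}"
    then have "v \<ge> 0" by auto
    then have "v = int (nat v)" by simp
    moreover have "nat v \<in> Iset a b c x y" using v \<open>v \<ge> 0\<close> unfolding Iset_def by auto
    ultimately show "v \<in> int ` Iset a b c x y" by blast
  qed
  have "card (Iset a b c x y) = card (int ` Iset a b c x y)" by (simp add: card_image)
  also have "\<dots> = nat (?hi - ?lo + 1)" unfolding im by simp
  finally show ?thesis by simp
qed

lemma schur_kz:
  assumes "c \<le> b" "b \<le> a"
  shows "schur_coeff (a,b,c) (x,y,z) = kz (int a) (int b) (int c) (int x) (int y) (int z)"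
proof -
  have "schur_coeff (a,b,c) (x,y,z) = (if x+y+z = a+b+c then int (card (Iset a b c x y)) else 0)"
    unfolding schur_coeff_def schur_set[OF assms] by (simp add: card_image[OF tabg_inj])
  also have "\<dots> = kz (int a) (int b) (int c) (int x) (int y) (int z)"
    unfolding card_Iset kz_def by simp
  finally show ?thesis .
qed

lemma kz_sym12: "kz a b c x y z = kz a b c y x z"
  unfolding kz_def by (simp add: ac_simps min.left_commute min.commute)

lemma kz_sym23: "0 \<le> c \<Longrightarrow> c \<le> b \<Longrightarrow> b \<le> a \<Longrightarrow> kz a b c x y z = kz a b c x z y"
  unfolding kz_def min_def max_def by (simp split: if_splits)

definition E3 :: "int \<Rightarrow> int \<Rightarrow> int \<Rightarrow> int \<Rightarrow> int \<Rightarrow> int \<Rightarrow> int" where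
"E3 a b c x u v = (if a \<ge> u \<and> u \<ge> b \<and> b \<ge> v \<and> v \<ge> c \<and> x+u+v = a+b+c then 1 else 0)"

lemma d23: "0 \<le> c \<Longrightarrow> c \<le> b \<Longrightarrow> b \<le> a \<Longrightarrow> D23 (kz a b c) x y z = E3 a b c x (y-1) z - E3 a b c x (z-1) y"
  unfolding D23_def E3_def kz_def min_def max_def by (simp split: if_splits)

declare [[smt_timeout=600]]

definition Pf :: "int \<Rightarrow> int \<Rightarrow> int \<Rightarrow> int" where "Pf a b u = (if a \<ge> u \<and> u \<ge> b then 1 else 0)"

lemma E3_PQ: "E3 a b c x u v = (if x+u+v = a+b+c then Pf a b u * Pf b c v else 0)"
  unfolding E3_def Pf_def by auto

lemma Pf_d: "b \<le> a \<Longrightarrow> Pf a b u - Pf a b (u-1) = (if u = b then 1 else 0) - (if u = a+1 then 1 else 0)"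
  unfolding Pf_def by auto

lemma bialt: assumes "0 \<le> c" "c \<le> b" "b \<le> a" shows "Dop (kz a b c) x y z = Alt (a+2) (b+1) c x y z"
proof (cases "x+y+z = a+b+c+3")
  case False
  then show ?thesis unfolding Dop_def D12_def D13_def d23[OF assms] Alt_def E3_def by auto
next
  case True
  let ?P = "Pf a b" and ?Q = "Pf b c"
  have "Dop (kz a b c) x y z = ?P (y-1) * ?Q z - ?P (z-1) * ?Q y - ?P (y-1) * ?Q (z-1) + ?P (z-2) * ?Q y
     - ?P (y-2) * ?Q z + ?P (z-1) * ?Q (y-1) + ?P (y-2) * ?Q (z-1) - ?P (z-2) * ?Q (y-1)"
    unfolding Dop_def D12_def D13_def d23[OF assms] E3_PQ using True by simp
  also have "\<dots> = (?P (y-1) - ?P (y-1-1)) * (?Q z - ?Q (z-1)) - (?P (z-1) - ?P (z-1-1)) * (?Q y - ?Q (y-1))"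
    by (simp add: algebra_simps)
  also have "\<dots> = ((if y-1 = b then 1 else 0) - (if y-1 = a+1 then 1 else 0)) * ((if z = c then 1 else 0) - (if z = b+1 then 1 else 0))
     - ((if z-1 = b then 1 else 0) - (if z-1 = a+1 then 1 else 0)) * ((if y = c then 1 else 0) - (if y = b+1 then 1 else 0))"
    using assms by (simp only: Pf_d)
  also have "\<dots> = Alt (a+2) (b+1) c x y z"
    unfolding Alt_def using True assms by auto
  finally show ?thesis .
qed

definition Kp :: "triple \<Rightarrow> int \<Rightarrow> int \<Rightarrow> int \<Rightarrow> int" where
"Kp p = (case p of (a,b,c) \<Rightarrow> kz (int a) (int b) (int c))"

definition Altp :: "triple \<Rightarrow> int \<Rightarrow> int \<Rightarrow> int \<Rightarrow> int" where
"Altp p = (case p of (a,b,c) \<Rightarrow> Alt (int a + 2) (int b + 1) (int c))"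

lemma schur_Kp: "is_part3 p \<Longrightarrow> schur_coeff p (x,y,z) = Kp p (int x) (int y) (int z)"
  by (cases p) (auto simp: is_part3_def Kp_def schur_kz)

lemma Kp_bialt: "is_part3 p \<Longrightarrow> Dop (Kp p) x y z = Altp p x y z"
  by (cases p) (auto simp: is_part3_def Kp_def Altp_def intro!: bialt)

lemma Kp_orth: "orth (Kp p)"
  by (cases p) (auto simp: orth_def Kp_def kz_def)

lemma Kp_sym12: "Kp p x y z = Kp p y x z"
  by (cases p) (simp add: Kp_def kz_sym12[of _ _ _ x y z])

lemma Kp_sym23: "is_part3 p \<Longrightarrow> Kp p x y z = Kp p x z y"
  by (cases p) (auto simp: Kp_def is_part3_def intro!: kz_sym23)

lemma Kp_size: "Kp p x y z \<noteq> 0 \<Longrightarrow> 0 \<le> x \<and> 0 \<le> y \<and> 0 \<le> z \<and> x + y + z = int (size3 p)"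
  by (cases p) (auto simp: Kp_def kz_def size3_def split: if_splits)

definition B3 :: "int \<Rightarrow> (int \<times> int \<times> int) set" where
"B3 M = {0..M} \<times> {0..M} \<times> {0..M}"

definition conv :: "int \<Rightarrow> (int \<Rightarrow> int \<Rightarrow> int \<Rightarrow> int) \<Rightarrow> (int \<Rightarrow> int \<Rightarrow> int \<Rightarrow> int) \<Rightarrow> int \<Rightarrow> int \<Rightarrow> int \<Rightarrow> int" where
"conv M g F x y z = (\<Sum>q\<in>B3 M. g (fst q) (fst (snd q)) (snd (snd q)) * F (x - fst q) (y - fst (snd q)) (z - snd (snd q)))"

lemma D12_conv: "D12 (conv M g F) = conv M g (D12 F)"
  by (intro ext) (simp add: D12_def conv_def sum_subtractf[symmetric] right_diff_distrib algebra_simps)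
lemma D13_conv: "D13 (conv M g F) = conv M g (D13 F)"
  by (intro ext) (simp add: D13_def conv_def sum_subtractf[symmetric] right_diff_distrib algebra_simps)
lemma D23_conv: "D23 (conv M g F) = conv M g (D23 F)"
  by (intro ext) (simp add: D23_def conv_def sum_subtractf[symmetric] right_diff_distrib algebra_simps)
lemma Dop_conv: "Dop (conv M g F) = conv M g (Dop F)"
  unfolding Dop_def D12_conv D13_conv D23_conv ..

definition hsum :: "triple set \<Rightarrow> (triple \<Rightarrow> int) \<Rightarrow> (triple \<Rightarrow> int \<Rightarrow> int \<Rightarrow> int \<Rightarrow> int) \<Rightarrow> int \<Rightarrow> int \<Rightarrow> int \<Rightarrow> int" where
"hsum A c F x y z = (\<Sum>p\<in>A. c p * F p x y z)"

lemma D12_hsum: "D12 (hsum A c F) = hsum A c (\<lambda>p. D12 (F p))"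
  by (intro ext) (simp add: D12_def hsum_def sum_subtractf[symmetric] right_diff_distrib)
lemma D13_hsum: "D13 (hsum A c F) = hsum A c (\<lambda>p. D13 (F p))"
  by (intro ext) (simp add: D13_def hsum_def sum_subtractf[symmetric] right_diff_distrib)
lemma D23_hsum: "D23 (hsum A c F) = hsum A c (\<lambda>p. D23 (F p))"
  by (intro ext) (simp add: D23_def hsum_def sum_subtractf[symmetric] right_diff_distrib)
lemma Dop_hsum: "Dop (hsum A c F) = hsum A c (\<lambda>p. Dop (F p))"
  unfolding Dop_def D12_hsum D13_hsum D23_hsum ..

lemma delta3:
  fixes g :: "int \<Rightarrow> int \<Rightarrow> int \<Rightarrow> int" and B :: "(int \<times> int \<times> int) set" and x y z q1 q2 q3 :: int
  assumes van: "\<And>i j k. g i j k \<noteq> 0 \<Longrightarrow> (i,j,k) \<in> B" and fin: "finite B"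
  shows "(\<Sum>q\<in>B. g (fst q) (fst (snd q)) (snd (snd q)) *
     (if x - fst q = q1 \<and> y - fst (snd q) = q2 \<and> z - snd (snd q) = q3 then 1 else 0)) = g (x-q1) (y-q2) (z-q3)"
proof -
  have "(\<Sum>q\<in>B. g (fst q) (fst (snd q)) (snd (snd q)) *
     (if x - fst q = q1 \<and> y - fst (snd q) = q2 \<and> z - snd (snd q) = q3 then 1 else 0))
     = (\<Sum>q\<in>B. if q = (x-q1, y-q2, z-q3) then g (x-q1) (y-q2) (z-q3) else 0)"
  proof (rule sum.cong[OF refl])
    fix q :: "int \<times> int \<times> int"
    obtain i j k where q: "q = (i,j,k)" by (cases q) auto
    show "g (fst q) (fst (snd q)) (snd (snd q)) *
     (if x - fst q = q1 \<and> y - fst (snd q) = q2 \<and> z - snd (snd q) = q3 then 1 else 0)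
      = (if q = (x-q1, y-q2, z-q3) then g (x-q1) (y-q2) (z-q3) else 0)"
      unfolding q by auto
  qed
  also have "\<dots> = (if (x-q1, y-q2, z-q3) \<in> B then g (x-q1) (y-q2) (z-q3) else 0)"
    by (simp add: sum.delta[OF fin])
  also have "\<dots> = g (x-q1) (y-q2) (z-q3)" using van by auto
  finally show ?thesis .
qed

definition alts :: "(int \<Rightarrow> int \<Rightarrow> int \<Rightarrow> int) \<Rightarrow> int \<Rightarrow> int \<Rightarrow> int \<Rightarrow> int \<Rightarrow> int \<Rightarrow> int \<Rightarrow> int" where
"alts g q1 q2 q3 x y z = g (x-q1) (y-q2) (z-q3) - g (x-q2) (y-q1) (z-q3) - g (x-q1) (y-q3) (z-q2)
   - g (x-q3) (y-q2) (z-q1) + g (x-q2) (y-q3) (z-q1) + g (x-q3) (y-q1) (z-q2)"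

lemma conv_Alt:
  assumes van: "\<And>i j k. g i j k \<noteq> 0 \<Longrightarrow> (i,j,k) \<in> B3 M"
  shows "conv M g (Alt q1 q2 q3) x y z = alts g q1 q2 q3 x y z"
proof -
  have fin: "finite (B3 M)" by (simp add: B3_def)
  note d = delta3[OF van fin]
  have d1: "(\<Sum>q\<in>B3 M. g (fst q) (fst (snd q)) (snd (snd q)) *
     (if x - fst q = q1 \<and> y - fst (snd q) = q2 \<and> z - snd (snd q) = q3 then 1 else 0)) = g (x-q1) (y-q2) (z-q3)"
    by (rule d)
  have d2: "(\<Sum>q\<in>B3 M. g (fst q) (fst (snd q)) (snd (snd q)) *
     (if x - fst q = q2 \<and> y - fst (snd q) = q1 \<and> z - snd (snd q) = q3 then 1 else 0)) = g (x-q2) (y-q1) (z-q3)"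
    by (rule d)
  have d3: "(\<Sum>q\<in>B3 M. g (fst q) (fst (snd q)) (snd (snd q)) *
     (if x - fst q = q1 \<and> y - fst (snd q) = q3 \<and> z - snd (snd q) = q2 then 1 else 0)) = g (x-q1) (y-q3) (z-q2)"
    by (rule d)
  have d4: "(\<Sum>q\<in>B3 M. g (fst q) (fst (snd q)) (snd (snd q)) *
     (if x - fst q = q3 \<and> y - fst (snd q) = q2 \<and> z - snd (snd q) = q1 then 1 else 0)) = g (x-q3) (y-q2) (z-q1)"
    by (rule d)
  have d5: "(\<Sum>q\<in>B3 M. g (fst q) (fst (snd q)) (snd (snd q)) *
     (if x - fst q = q2 \<and> y - fst (snd q) = q3 \<and> z - snd (snd q) = q1 then 1 else 0)) = g (x-q2) (y-q3) (z-q1)"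
    by (rule d)
  have d6: "(\<Sum>q\<in>B3 M. g (fst q) (fst (snd q)) (snd (snd q)) *
     (if x - fst q = q3 \<and> y - fst (snd q) = q1 \<and> z - snd (snd q) = q2 then 1 else 0)) = g (x-q3) (y-q1) (z-q2)"
    by (rule d)
  show ?thesis
    unfolding conv_def Alt_def alts_def distrib_left right_diff_distrib sum.distrib sum_subtractf
    using d1 d2 d3 d4 d5 d6 by linarith
qed

lemma image_int_atMost: "int ` {..a} = {0..int a}"
proof (intro equalityI subsetI)
  fix v assume "v \<in> {0..int a}"
  then have "nat v \<in> {..a}" "v = int (nat v)" by auto
  then show "v \<in> int ` {..a}" by blast
qed auto

lemma lvl:
  fixes F :: "int \<Rightarrow> int"
  assumes M: "0 \<le> M" and van: "\<And>i. 0 \<le> i \<Longrightarrow> int a < i \<or> M < i \<Longrightarrow> F i = 0"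
  shows "(\<Sum>b\<le>a. F (int b)) = (\<Sum>i\<in>{0..M}. F i)"
proof -
  have "(\<Sum>b\<le>a. F (int b)) = (\<Sum>i\<in>int ` {..a}. F i)" by (simp add: sum.reindex)
  also have "\<dots> = (\<Sum>i\<in>{0..int a}. F i)" by (simp add: image_int_atMost)
  also have "\<dots> = (\<Sum>i\<in>{0..max (int a) M}. F i)"
    by (rule sum.mono_neutral_left) (use van in auto)
  also have "\<dots> = (\<Sum>i\<in>{0..M}. F i)"
    by (rule sum.mono_neutral_right) (use van M in auto)
  finally show ?thesis .
qed

lemma prodL:
  assumes mu: "is_part3 mu" and nu: "is_part3 nu"
  shows "schur_prod_coeff mu nu (a1,a2,a3) = conv (int (size3 mu)) (Kp mu) (Kp nu) (int a1) (int a2) (int a3)"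
proof -
  define M where "M = int (size3 mu)"
  define G where "G i j k = Kp mu i j k * Kp nu (int a1 - i) (int a2 - j) (int a3 - k)" for i j k
  have M0: "0 \<le> M" unfolding M_def by simp
  have van: "G i j k = 0" if "0 \<le> i" "0 \<le> j" "0 \<le> k"
     "int a1 < i \<or> M < i \<or> int a2 < j \<or> M < j \<or> int a3 < k \<or> M < k" for i j k
  proof (cases "Kp mu i j k = 0 \<or> Kp nu (int a1 - i) (int a2 - j) (int a3 - k) = 0")
    case True then show ?thesis unfolding G_def by auto
  next
    case False
    then have "i + j + k = M" "0 \<le> int a1 - i" "0 \<le> int a2 - j" "0 \<le> int a3 - k"
      using Kp_size[of mu i j k] Kp_size[of nu "int a1 - i" "int a2 - j" "int a3 - k"] unfolding M_def by auto
    then show ?thesis using that by linarith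
  qed
  have s1: "schur_prod_coeff mu nu (a1,a2,a3) = (\<Sum>b1\<le>a1. \<Sum>b2\<le>a2. \<Sum>b3\<le>a3. G (int b1) (int b2) (int b3))"
    unfolding schur_prod_coeff_def G_def prod.case
    by (intro sum.cong refl) (simp add: schur_Kp mu nu of_nat_diff)
  have s2: "(\<Sum>b3\<le>a3. G (int b1) (int b2) (int b3)) = (\<Sum>k\<in>{0..M}. G (int b1) (int b2) k)" for b1 b2
    by (rule lvl[OF M0]) (use van in auto)
  have s3: "(\<Sum>b2\<le>a2. \<Sum>k\<in>{0..M}. G (int b1) (int b2) k) = (\<Sum>j\<in>{0..M}. \<Sum>k\<in>{0..M}. G (int b1) j k)" for b1
    by (rule lvl[OF M0]) (auto intro!: sum.neutral van)
  have s4: "(\<Sum>b1\<le>a1. \<Sum>j\<in>{0..M}. \<Sum>k\<in>{0..M}. G (int b1) j k) = (\<Sum>i\<in>{0..M}. \<Sum>j\<in>{0..M}. \<Sum>k\<in>{0..M}. G i j k)"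
    by (rule lvl[OF M0]) (auto intro!: sum.neutral van)
  have s5: "(\<Sum>i\<in>{0..M}. \<Sum>j\<in>{0..M}. \<Sum>k\<in>{0..M}. G i j k) = conv M (Kp mu) (Kp nu) (int a1) (int a2) (int a3)"
    unfolding conv_def B3_def G_def by (simp add: sum.cartesian_product case_prod_beta)
  have "schur_prod_coeff mu nu (a1,a2,a3) = conv M (Kp mu) (Kp nu) (int a1) (int a2) (int a3)"
    using s1 s2 s3 s4 s5 by simp
  thus ?thesis unfolding M_def .
qed

lemma antisym_eq:
  fixes F :: "int \<Rightarrow> int \<Rightarrow> int \<Rightarrow> int"
  assumes a12: "\<And>x y z. F y x z = - F x y z" and a23: "\<And>x y z. F x z y = - F x y z"
    and dec: "\<And>x y z. z < y \<Longrightarrow> y < x \<Longrightarrow> F x y z = 0"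
  shows "F x y z = 0"
proof -
  have t12: "F a a c = 0" for a c using a12[of a a c] by linarith
  have t23: "F a b b = 0" for a b using a23[of a b b] by linarith
  have t13: "F a b a = 0" for a b using a23[of a a b] t12[of a b] by linarith
  note i = a12[of x y z] a12[of y x z] a12[of x z y] a12[of z x y] a12[of y z x] a12[of z y x]
     a23[of x y z] a23[of y x z] a23[of x z y] a23[of z x y] a23[of y z x] a23[of z y x]
  consider "z < y \<and> y < x" | "z < x \<and> x < y" | "y < z \<and> z < x" | "y < x \<and> x < z" | "x < z \<and> z < y"
    | "x < y \<and> y < z" | "x = y" | "y = z" | "x = z" by linarith
  then show ?thesis
  proof cases
    case 1 then show ?thesis using dec by blast
  next
    case 2 then have "F y x z = 0" using dec by blast
    then show ?thesis using i by linarith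
  next
    case 3 then have "F x z y = 0" using dec by blast
    then show ?thesis using i by linarith
  next
    case 4 then have "F z x y = 0" using dec by blast
    then show ?thesis using i by linarith
  next
    case 5 then have "F y z x = 0" using dec by blast
    then show ?thesis using i by linarith
  next
    case 6 then have "F z y x = 0" using dec by blast
    then show ?thesis using i by linarith
  next
    case 7 then show ?thesis using t12 by simp
  next
    case 8 then show ?thesis using t23 by simp
  next
    case 9 then show ?thesis using t13 by simp
  qed
qed

lemma alts_a12:
  assumes s: "\<And>u v w. g u v w = g v u w"
  shows "alts g q1 q2 q3 y x z = - alts g q1 q2 q3 x y z"
  unfolding alts_def
  using s[of "y-q1" "x-q2" "z-q3"] s[of "y-q2" "x-q1" "z-q3"] s[of "y-q1" "x-q3" "z-q2"]
        s[of "y-q3" "x-q2" "z-q1"] s[of "y-q2" "x-q3" "z-q1"] s[of "y-q3" "x-q1" "z-q2"]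
  by linarith

lemma alts_a23:
  assumes s: "\<And>u v w. g u v w = g u w v"
  shows "alts g q1 q2 q3 x z y = - alts g q1 q2 q3 x y z"
  unfolding alts_def
  using s[of "x-q1" "z-q2" "y-q3"] s[of "x-q2" "z-q1" "y-q3"] s[of "x-q1" "z-q3" "y-q2"]
        s[of "x-q3" "z-q2" "y-q1"] s[of "x-q2" "z-q3" "y-q1"] s[of "x-q3" "z-q1" "y-q2"]
  by linarith

lemma Alt_a12: "Alt q1 q2 q3 y x z = - Alt q1 q2 q3 x y z"
  unfolding Alt_def by (simp add: conj_ac)
lemma Alt_a23: "Alt q1 q2 q3 x z y = - Alt q1 q2 q3 x y z"
  unfolding Alt_def by (simp add: conj_ac)

lemma Alt_dec: "q3 < q2 \<Longrightarrow> q2 < q1 \<Longrightarrow> z < y \<Longrightarrow> y < x \<Longrightarrow>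
   Alt q1 q2 q3 x y z = (if x = q1 \<and> y = q2 \<and> z = q3 then 1 else 0)"
  unfolding Alt_def by auto

lemma hsum_Altp_a12: "hsum A c Altp y x z = - hsum A c Altp x y z"
  unfolding hsum_def Altp_def by (simp add: case_prod_beta Alt_a12[of _ _ _ y x z] sum_negf[symmetric])
lemma hsum_Altp_a23: "hsum A c Altp x z y = - hsum A c Altp x y z"
  unfolding hsum_def Altp_def by (simp add: case_prod_beta Alt_a23[of _ _ _ x z y] sum_negf[symmetric])

declare [[smt_timeout=600]]
lemma Fint: fixes la lb lc ma mb mc na nb nc :: int
 assumes "0 \<le> lc" "lc \<le> lb" "lb \<le> la" "0 \<le> mc" "mc \<le> mb" "mb \<le> ma" "0 \<le> nc" "nc \<le> nb" "nb \<le> na"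
 shows "kz ma mb mc (la+2-(na+2)) (lb+1-(nb+1)) (lc-nc) - kz ma mb mc (la+2-(nb+1)) (lb+1-(na+2)) (lc-nc)
  - kz ma mb mc (la+2-(na+2)) (lb+1-nc) (lc-(nb+1)) - kz ma mb mc (la+2-nc) (lb+1-(nb+1)) (lc-(na+2))
  + kz ma mb mc (la+2-(nb+1)) (lb+1-nc) (lc-(na+2)) + kz ma mb mc (la+2-nc) (lb+1-(na+2)) (lc-(nb+1)) = 1
  \<longleftrightarrow> (la+lb+lc = ma+mb+mc+na+nb+nc \<and> la \<le> ma+na \<and> lb \<le> ma+nb \<and> lb \<le> mb+na \<and> lc \<le> ma+nc \<and> lc \<le> mb+nb \<and> lc \<le> mc+na
    \<and> mc+nc \<le> lc \<and> mc+nb \<le> lb \<and> mb+nc \<le> lb \<and> mc+na \<le> la \<and> mb+nb \<le> la \<and> ma+nc \<le> la \<and>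
   (mc=mb \<or> mb=ma \<or> nc=nb \<or> nb=na \<or> lc=lb \<or> lb=la \<or> la = ma+na \<or> lb = ma+nb \<or> lb = mb+na \<or> lc = ma+nc \<or> lc = mb+nb \<or> lc = mc+na
    \<or> mc+nc = lc \<or> mc+nb = lb \<or> mb+nc = lb \<or> mc+na = la \<or> mb+nb = la \<or> ma+nc = la))"
  using assms unfolding kz_def by smt
lemma Fnat: fixes l1 l2 l3 m1 m2 m3 n1 n2 n3 :: nat
 assumes "l3 \<le> l2" "l2 \<le> l1" "m3 \<le> m2" "m2 \<le> m1" "n3 \<le> n2" "n2 \<le> n1"
 shows "kz (int m1) (int m2) (int m3) (int l1+2-(int n1+2)) (int l2+1-(int n2+1)) (int l3-int n3)
  - kz (int m1) (int m2) (int m3) (int l1+2-(int n2+1)) (int l2+1-(int n1+2)) (int l3-int n3)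
  - kz (int m1) (int m2) (int m3) (int l1+2-(int n1+2)) (int l2+1-int n3) (int l3-(int n2+1))
  - kz (int m1) (int m2) (int m3) (int l1+2-int n3) (int l2+1-(int n2+1)) (int l3-(int n1+2))
  + kz (int m1) (int m2) (int m3) (int l1+2-(int n2+1)) (int l2+1-int n3) (int l3-(int n1+2))
  + kz (int m1) (int m2) (int m3) (int l1+2-int n3) (int l2+1-(int n1+2)) (int l3-(int n2+1)) = 1
  \<longleftrightarrow> (l1+l2+l3 = m1+m2+m3+n1+n2+n3 \<and> l1 \<le> m1+n1 \<and> l2 \<le> m1+n2 \<and> l2 \<le> m2+n1 \<and> l3 \<le> m1+n3 \<and> l3 \<le> m2+n2 \<and> l3 \<le> m3+n1
    \<and> m3+n3 \<le> l3 \<and> m3+n2 \<le> l2 \<and> m2+n3 \<le> l2 \<and> m3+n1 \<le> l1 \<and> m2+n2 \<le> l1 \<and> m1+n3 \<le> l1 \<and>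
   (m3=m2 \<or> m2=m1 \<or> n3=n2 \<or> n2=n1 \<or> l3=l2 \<or> l2=l1 \<or> l1 = m1+n1 \<or> l2 = m1+n2 \<or> l2 = m2+n1 \<or> l3 = m1+n3 \<or> l3 = m2+n2 \<or> l3 = m3+n1
    \<or> m3+n3 = l3 \<or> m3+n2 = l2 \<or> m2+n3 = l2 \<or> m3+n1 = l1 \<or> m2+n2 = l1 \<or> m1+n3 = l1))"
proof -
  note f = Fint[where la="int l1" and lb="int l2" and lc="int l3" and ma="int m1" and mb="int m2" and mc="int m3" and na="int n1" and nb="int n2" and nc="int n3"]
  show ?thesis using f assms by (simp only: of_nat_add[symmetric] of_nat_le_iff of_nat_eq_iff of_nat_0_le_iff simp_thms)
qed

theorem theorem3p1:
  fixes la mu nu :: triple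
  assumes "is_part3 la" and "is_part3 mu" and "is_part3 nu"
  shows "lr_coeff la mu nu = 1 \<longleftrightarrow> on_horn3_facet la mu nu"
proof -
  obtain l1 l2 l3 where la: "la = (l1,l2,l3)" by (cases la) auto
  obtain m1 m2 m3 where mu: "mu = (m1,m2,m3)" by (cases mu) auto
  obtain n1 n2 n3 where nu: "nu = (n1,n2,n3)" by (cases nu) auto
  have lp: "l2 \<le> l1" "l3 \<le> l2" using assms(1) la by (auto simp: is_part3_def)
  have mp: "m2 \<le> m1" "m3 \<le> m2" using assms(2) mu by (auto simp: is_part3_def)
  have np: "n2 \<le> n1" "n3 \<le> n2" using assms(3) nu by (auto simp: is_part3_def)
  define N where "N = size3 mu + size3 nu"
  define PS where "PS = parts3_of_size N"
  define M where "M = int (size3 mu)"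
  define S where "S = alts (Kp mu) (int n1 + 2) (int n2 + 1) (int n3)"
  define c0 where "c0 p = (if p \<in> PS then (case p of (a,b,c) \<Rightarrow> S (int a + 2) (int b + 1) (int c)) else 0)" for p
  define L where "L = conv M (Kp mu) (Kp nu)"
  have finPS: "finite PS"
  proof (rule finite_subset)
    show "PS \<subseteq> {..N} \<times> {..N} \<times> {..N}"
      by (auto simp: PS_def parts3_of_size_def size3_def)
  qed auto
  have PSpart: "is_part3 p" if "p \<in> PS" for p using that by (simp add: PS_def parts3_of_size_def)
  have vanmu: "(i,j,k) \<in> B3 M" if "Kp mu i j k \<noteq> 0" for i j k
    using Kp_size[OF that] unfolding B3_def M_def by auto
  have eAlt: "Dop (Kp nu) = Alt (int n1 + 2) (int n2 + 1) (int n3)"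
    by (intro ext, subst Kp_bialt[OF assms(3)]) (simp add: Altp_def nu)
  have DL: "Dop L x y z = S x y z" for x y z
    unfolding L_def Dop_conv eAlt S_def by (rule conv_Alt[OF vanmu])
  have oL: "orth L"
    unfolding orth_def L_def conv_def
  proof (intro allI impI sum.neutral ballI)
    fix x y z :: int and q assume neg: "x < 0 \<or> y < 0 \<or> z < 0" and q: "q \<in> B3 M"
    then have "Kp nu (x - fst q) (y - fst (snd q)) (z - snd (snd q)) = 0"
      using Kp_orth[of nu] unfolding orth_def B3_def by (auto simp: mem_Times_iff)
    then show "Kp mu (fst q) (fst (snd q)) (snd (snd q)) * Kp nu (x - fst q) (y - fst (snd q)) (z - snd (snd q)) = 0"
      by simp
  qed
  have oH: "orth (hsum PS c Kp)" for c
    unfolding orth_def hsum_def using Kp_orth unfolding orth_def by (auto intro!: sum.neutral)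
  have DH: "Dop (hsum PS c Kp) x y z = hsum PS c Altp x y z" for c x y z
    unfolding Dop_hsum hsum_def by (rule sum.cong[OF refl]) (simp add: Kp_bialt PSpart)
  have Sa12: "S y x z = - S x y z" for x y z
    unfolding S_def by (rule alts_a12) (rule Kp_sym12)
  have Sa23: "S x z y = - S x y z" for x y z
    unfolding S_def by (rule alts_a23) (rule Kp_sym23[OF assms(2)])
  have Kmu0: "Kp mu u v w = 0" if "u + v + w \<noteq> M" for u v w
    using Kp_size[of mu u v w] that unfolding M_def by auto
  have Kmuneg: "Kp mu u v w = 0" if "w < 0" for u v w
    using Kp_orth[of mu] that unfolding orth_def by auto
  have sizes: "int (size3 nu) = int n1 + int n2 + int n3" "int N = M + int n1 + int n2 + int n3"
    unfolding N_def M_def nu size3_def by simp_all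
  have dec: "S x y z = hsum PS c0 Altp x y z" if zy: "z < y" "y < x" for x y z
  proof -
    have R: "hsum PS c0 Altp x y z = (\<Sum>p\<in>PS. c0 p *
        (if int (fst p) + 2 = x \<and> int (fst (snd p)) + 1 = y \<and> int (snd (snd p)) = z then 1 else 0))"
      unfolding hsum_def
    proof (rule sum.cong[OF refl])
      fix p assume "p \<in> PS"
      then have pp: "is_part3 p" by (rule PSpart)
      obtain a b d where p: "p = (a,b,d)" by (cases p) auto
      have "Altp p x y z = (if x = int a + 2 \<and> y = int b + 1 \<and> z = int d then 1 else 0)"
        unfolding p Altp_def prod.case using pp p zy by (subst Alt_dec) (auto simp: is_part3_def)
      then show "c0 p * Altp p x y z = c0 p *
        (if int (fst p) + 2 = x \<and> int (fst (snd p)) + 1 = y \<and> int (snd (snd p)) = z then 1 else 0)"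
        unfolding p by auto
    qed
    show ?thesis
    proof (cases "z < 0")
      case True
      then have "hsum PS c0 Altp x y z = 0" unfolding R by (auto intro!: sum.neutral)
      moreover have "S x y z = 0" unfolding S_def alts_def using True by (simp add: Kmuneg)
      ultimately show ?thesis by simp
    next
      case False
      define p0 where "p0 = (nat (x-2), nat (y-1), nat z)"
      have "hsum PS c0 Altp x y z = (\<Sum>p\<in>PS. if p = p0 then c0 p0 else 0)"
        unfolding R
      proof (rule sum.cong[OF refl])
        fix p :: triple
        obtain a b d where p: "p = (a,b,d)" by (cases p) auto
        show "c0 p * (if int (fst p) + 2 = x \<and> int (fst (snd p)) + 1 = y \<and> int (snd (snd p)) = z then 1 else 0)
            = (if p = p0 then c0 p0 else 0)"
          unfolding p p0_def using False zy by auto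
      qed
      also have "\<dots> = (if p0 \<in> PS then c0 p0 else 0)" by (simp add: sum.delta[OF finPS])
      finally have Rv: "hsum PS c0 Altp x y z = (if p0 \<in> PS then c0 p0 else 0)" .
      show ?thesis
      proof (cases "p0 \<in> PS")
        case True
        have "c0 p0 = S x y z" unfolding c0_def p0_def using True[unfolded p0_def] False zy by simp
        then show ?thesis using Rv True by simp
      next
        case nin: False
        have "is_part3 p0" unfolding p0_def is_part3_def using False zy by auto
        then have "size3 p0 \<noteq> N" using nin unfolding PS_def parts3_of_size_def by auto
        then have "x + y + z - 3 \<noteq> int N" unfolding p0_def size3_def using False zy by auto
        then have ne: "x + y + z - 3 \<noteq> M + int n1 + int n2 + int n3" using sizes by simp
        have Kz: "Kp mu (x - a) (y - b) (z - c) = 0" if "a + b + c = int n1 + int n2 + int n3 + 3" for a b c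
          by (rule Kmu0) (use ne that in linarith)
        have "S x y z = 0" unfolding S_def alts_def
          using Kz[of "int n1 + 2" "int n2 + 1" "int n3"] Kz[of "int n2 + 1" "int n1 + 2" "int n3"]
            Kz[of "int n1 + 2" "int n3" "int n2 + 1"] Kz[of "int n3" "int n2 + 1" "int n1 + 2"]
            Kz[of "int n2 + 1" "int n3" "int n1 + 2"] Kz[of "int n3" "int n1 + 2" "int n2 + 1"]
          by simp
        then show ?thesis using Rv nin by simp
      qed
    qed
  qed
  have S_R: "S x y z = hsum PS c0 Altp x y z" for x y z
  proof -
    have "(\<lambda>x y z. S x y z - hsum PS c0 Altp x y z) x y z = 0"
    proof (rule antisym_eq[where F="\<lambda>x y z. S x y z - hsum PS c0 Altp x y z"], goal_cases)
      case (1 x y z)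
      show ?case using Sa12[of x y z] hsum_Altp_a12[of PS c0 x y z] by simp
    next
      case (2 x y z)
      show ?case using Sa23[of x y z] hsum_Altp_a23[of PS c0 x y z] by simp
    next
      case (3 x y z)
      show ?case using dec[OF 3] by simp
    qed
    then show ?thesis by simp
  qed
  have Lnat: "schur_prod_coeff mu nu (x,y,z) = L (int x) (int y) (int z)" for x y z
    unfolding L_def M_def by (rule prodL[OF assms(2,3)])
  have Hnat: "(\<Sum>p\<in>PS. c p * schur_coeff p (x,y,z)) = hsum PS c Kp (int x) (int y) (int z)" for c x y z
    unfolding hsum_def by (rule sum.cong[OF refl]) (simp add: schur_Kp PSpart)
  have LH: "L = hsum PS c0 Kp"
    by (rule Dop_inj[OF oL oH]) (simp add: DL DH S_R)
  define P where "P c = ((\<forall>al. schur_prod_coeff mu nu al =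
               (\<Sum>p\<in>parts3_of_size (size3 mu + size3 nu). c p * schur_coeff p al))
          \<and> (\<forall>p. p \<notin> parts3_of_size (size3 mu + size3 nu) \<longrightarrow> c p = 0))" for c
  have Pc0: "P c0"
    unfolding P_def PS_def[symmetric] N_def[symmetric]
  proof (intro conjI allI impI)
    fix al :: triple
    obtain x y z where al: "al = (x,y,z)" by (cases al) auto
    show "schur_prod_coeff mu nu al = (\<Sum>p\<in>PS. c0 p * schur_coeff p al)"
      unfolding al Lnat Hnat LH ..
  next
    fix p assume "p \<notin> PS" then show "c0 p = 0" by (simp add: c0_def)
  qed
  have uniq: "c = c0" if Pc: "P c" for c
  proof -
    have eqnat: "L (int a) (int b) (int d) = hsum PS c Kp (int a) (int b) (int d)" for a b d
      using Pc unfolding P_def PS_def[symmetric] N_def[symmetric] Lnat[symmetric] Hnat[symmetric] by blast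
    have LHc: "L = hsum PS c Kp"
    proof (intro ext)
      fix x y z :: int
      show "L x y z = hsum PS c Kp x y z"
      proof (cases "x < 0 \<or> y < 0 \<or> z < 0")
        case True then show ?thesis using oL oH[of c] unfolding orth_def by metis
      next
        case False
        then show ?thesis using eqnat[of "nat x" "nat y" "nat z"] by simp
      qed
    qed
    have Sc: "S x y z = hsum PS c Altp x y z" for x y z
      using DL[of x y z] DH[of c x y z] LHc by simp
    show "c = c0"
    proof (intro ext)
      fix p :: triple
      show "c p = c0 p"
      proof (cases "p \<in> PS")
        case False
        have "c p = 0" using False Pc unfolding P_def PS_def[symmetric] N_def[symmetric] by blast
        then show ?thesis using False unfolding c0_def by simp
      next
        case True
        obtain a b d where p: "p = (a,b,d)" by (cases p) auto
        have pp: "b \<le> a" "d \<le> b" using PSpart[OF True] p by (auto simp: is_part3_def)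
        have "hsum PS c Altp (int a + 2) (int b + 1) (int d) = (\<Sum>q\<in>PS. if q = p then c p else 0)"
          unfolding hsum_def
        proof (rule sum.cong[OF refl])
          fix q assume "q \<in> PS"
          then have qq: "is_part3 q" by (rule PSpart)
          obtain a' b' d' where q: "q = (a',b',d')" by (cases q) auto
          have "Altp q (int a + 2) (int b + 1) (int d) = (if int a + 2 = int a' + 2 \<and> int b + 1 = int b' + 1 \<and> int d = int d' then 1 else 0)"
            unfolding q Altp_def prod.case using qq q pp by (subst Alt_dec) (auto simp: is_part3_def)
          then show "c q * Altp q (int a + 2) (int b + 1) (int d) = (if q = p then c p else 0)"
            unfolding q p by auto
        qed
        also have "\<dots> = c p" using True by (simp add: sum.delta[OF finPS])
        finally have "c p = S (int a + 2) (int b + 1) (int d)" using Sc by simp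
        then show ?thesis unfolding c0_def using True p by simp
      qed
    qed
  qed
  have "lr_coeff la mu nu = (THE c. P c) la" by (simp add: lr_coeff_def P_def)
  also have "(THE c. P c) = c0" by (rule the_equality[where P=P, OF Pc0 uniq])
  finally have lr: "lr_coeff la mu nu = c0 la" .
  have facet: "on_horn3_facet la mu nu \<longleftrightarrow>
    (l1+l2+l3 = m1+m2+m3+n1+n2+n3 \<and> l1 \<le> m1+n1 \<and> l2 \<le> m1+n2 \<and> l2 \<le> m2+n1 \<and> l3 \<le> m1+n3 \<and> l3 \<le> m2+n2 \<and> l3 \<le> m3+n1
    \<and> m3+n3 \<le> l3 \<and> m3+n2 \<le> l2 \<and> m2+n3 \<le> l2 \<and> m3+n1 \<le> l1 \<and> m2+n2 \<le> l1 \<and> m1+n3 \<le> l1 \<and>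
   (m3=m2 \<or> m2=m1 \<or> n3=n2 \<or> n2=n1 \<or> l3=l2 \<or> l2=l1 \<or> l1 = m1+n1 \<or> l2 = m1+n2 \<or> l2 = m2+n1 \<or> l3 = m1+n3 \<or> l3 = m2+n2 \<or> l3 = m3+n1
    \<or> m3+n3 = l3 \<or> m3+n2 = l2 \<or> m2+n3 = l2 \<or> m3+n1 = l1 \<or> m2+n2 = l1 \<or> m1+n3 = l1))"
    unfolding on_horn3_facet_def in_horn3_def horn3_ineqs_def la mu nu size3_def
    using lp mp np by (auto simp: add.assoc)
  show ?thesis
  proof (cases "la \<in> PS")
    case True
    have "c0 la = S (int l1 + 2) (int l2 + 1) (int l3)" unfolding c0_def using True la by simp
    also have "\<dots> = kz (int m1) (int m2) (int m3) (int l1+2-(int n1+2)) (int l2+1-(int n2+1)) (int l3-int n3)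
  - kz (int m1) (int m2) (int m3) (int l1+2-(int n2+1)) (int l2+1-(int n1+2)) (int l3-int n3)
  - kz (int m1) (int m2) (int m3) (int l1+2-(int n1+2)) (int l2+1-int n3) (int l3-(int n2+1))
  - kz (int m1) (int m2) (int m3) (int l1+2-int n3) (int l2+1-(int n2+1)) (int l3-(int n1+2))
  + kz (int m1) (int m2) (int m3) (int l1+2-(int n2+1)) (int l2+1-int n3) (int l3-(int n1+2))
  + kz (int m1) (int m2) (int m3) (int l1+2-int n3) (int l2+1-(int n1+2)) (int l3-(int n2+1))"
      unfolding S_def alts_def Kp_def mu by simp
    finally show ?thesis unfolding lr facet using Fnat[OF lp(2,1) mp(2,1) np(2,1)] by simp
  next
    case False
    then have "size3 la \<noteq> N" using assms(1) unfolding PS_def parts3_of_size_def by auto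
    then have "\<not> on_horn3_facet la mu nu" unfolding on_horn3_facet_def in_horn3_def N_def by auto
    moreover have "c0 la = 0" using False by (simp add: c0_def)
    ultimately show ?thesis using lr by simp
  qed
qed

end
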